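(* Let $A,B\in\mathbb{Z}$ with $|A|\leq B$ and $B\geq 2$. Let $\tilde M\in\mathbb{Z}^{2\times 2}$ have characteristic polynomial $x^2+Ax+B$ and let $\mathbf{v}\in\mathbb{Z}^2$ be such that $(\mathbf{v},\tilde M\mathbf{v})$ is linearly independent. Let $\tilde T$ be the unique nonempty compact set with $$\tilde M\tilde T+\frac{B-1}{2}\mathbf{v}=\tilde T\cup(\tilde T+\mathbf{v})\cup\cdots\cup(\tilde T+(B-2)\mathbf{v})\cup(-\tilde T),$$ and let $T$ be the unique nonempty compact set with $$MT+\begin{pmatrix}\frac{B-1}{2}\\0\end{pmatrix}=T\cup\left(T+\begin{pmatrix}1\\0\end{pmatrix}\right)\cup\cdots\cup\left(T+\begin{pmatrix}B-2\\0\end{pmatrix}\right)\cup(-T),\qquad M=\begin{pmatrix}0&-B\\1&-A\end{pmatrix}.$$ Let $C$ be the change-of-base matrix from the canonical basis to the basis $(\mathbf{v},\tilde M\mathbf{v})$, i.e. the matrix whose columns are $\mathbf{v}$ and $\tilde M\mathbf{v}$. Then $\tilde T=CT$.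
   Context: When $B=2$ the unions on the right-hand sides reduce to $\tilde T\cup(-\tilde T)$ and $T\cup(-T)$ respectively. *)

theory Defs
  imports "HOL-Analysis.Analysis"
begin

end

theory Submission
  imports Defs
begin

lemma sq_add_le: "((p::real) + q)^2 \<le> 2*p^2 + 2*q^2"
proof -
  have "0 \<le> (p - q)^2" by simp
  thus ?thesis by (simp add: power2_eq_square algebra_simps)
qed

lemma caseA:
  fixes a b :: real
  assumes ab: "\<bar>a\<bar> \<le> b" "b \<ge> 2" and disc: "a^2 \<le> 4*b - 1"
  shows "\<exists>V c \<kappa> K. 1 < c \<and> 0 < \<kappa> \<and> 0 < K \<and> (\<forall>x y. V (-x) (-y) = V x y)
     \<and> (\<forall>x y. c * V x y \<le> V (-b*y) (x - a*y))
     \<and> (\<forall>x y. \<kappa>*(x^2+y^2) \<le> V x y) \<and> (\<forall>x y. V x y \<le> K*(x^2+y^2))"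
proof -
  define V where "V = (\<lambda>x y::real. x^2 - a*x*y + b*y^2)"
  have neg: "\<forall>x y. V (-x) (-y) = V x y" by (simp add: V_def)
  have mul: "\<forall>x y. b * V x y \<le> V (-b*y) (x - a*y)"
    by (simp add: V_def power2_eq_square algebra_simps)
  have low: "(1/(4*(2*b+1)))*(x^2+y^2) \<le> V x y" for x y
  proof -
    define u where "u = x - a*y/2"
    have V: "V x y = u^2 + (b - a^2/4)*y^2" by (simp add: V_def u_def power2_eq_square algebra_simps)
    have x: "x^2 \<le> 2*u^2 + a^2*y^2/2" using sq_add_le[of u "a*y/2"] by (simp add: u_def power_mult_distrib power_divide)
    have y1: "(a^2/2 + 1)*y^2 \<le> (2*b+1/2)*y^2" using disc by (intro mult_right_mono) auto
    have y2: "(2*b+1/2)*y^2 \<le> (2*b+1)*(4*(b - a^2/4))*y^2"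
    proof (intro mult_right_mono)
      have "1 \<le> 4*(b - a^2/4)" using disc by simp
      hence "(2*b+1)*1 \<le> (2*b+1)*(4*(b - a^2/4))" using ab by (intro mult_left_mono) auto
      thus "2*b+1/2 \<le> (2*b+1)*(4*(b - a^2/4))" by simp
    qed simp
    have u2: "2*u^2 \<le> (2*b+1)*4*u^2" using ab by (intro mult_right_mono) auto
    have "x^2 + y^2 \<le> 2*u^2 + (a^2/2+1)*y^2" using x by (simp add: algebra_simps)
    also have "\<dots> \<le> (2*b+1)*4*u^2 + (2*b+1)*(4*(b - a^2/4))*y^2" using y1 y2 u2 by linarith
    also have "\<dots> = 4*(2*b+1) * V x y" unfolding V by (simp add: algebra_simps)
    finally have "x^2 + y^2 \<le> 4*(2*b+1) * V x y" .
    thus ?thesis using ab by (simp add: field_simps)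
  qed
  have up: "V x y \<le> (1 + \<bar>a\<bar> + b)*(x^2+y^2)" for x y
  proof -
    have "0 \<le> (\<bar>x\<bar> - \<bar>y\<bar>)^2" by simp
    hence "2*(\<bar>x\<bar>*\<bar>y\<bar>) \<le> x^2 + y^2" by (simp add: power2_eq_square algebra_simps)
    moreover have "0 \<le> \<bar>x\<bar>*\<bar>y\<bar>" by simp
    ultimately have xy: "\<bar>x*y\<bar> \<le> x^2 + y^2" unfolding abs_mult by linarith
    have "\<bar>a*x*y\<bar> \<le> \<bar>a\<bar>*(x^2+y^2)" unfolding mult.assoc abs_mult[of a]
      using xy by (intro mult_left_mono) auto
    hence "-(a*x*y) \<le> \<bar>a\<bar>*(x^2+y^2)" by linarith
    moreover have "b*y^2 \<le> b*(x^2+y^2)" using ab by (intro mult_left_mono) auto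
    moreover have "x^2 \<le> 1*(x^2+y^2)" by simp
    ultimately show ?thesis unfolding V_def by (simp only: distrib_right)
  qed
  show ?thesis
    apply (rule exI[of _ V], rule exI[of _ b], rule exI[of _ "1/(4*(2*b+1))"], rule exI[of _ "1 + \<bar>a\<bar> + b"])
    using neg mul low up ab by auto
qed

lemma caseB:
  fixes a b l1 l2 :: real
  assumes s: "l1 + l2 = -a" "l1*l2 = b" and ne: "l1 \<noteq> l2" and g: "1 < l1^2" "1 < l2^2"
  shows "\<exists>V c \<kappa> K. 1 < c \<and> 0 < \<kappa> \<and> 0 < K \<and> (\<forall>x y. V (-x) (-y) = V x y)
     \<and> (\<forall>x y. c * V x y \<le> V (-b*y) (x - a*y))
     \<and> (\<forall>x y. \<kappa>*(x^2+y^2) \<le> V x y) \<and> (\<forall>x y. V x y \<le> K*(x^2+y^2))"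
proof -
  define V where "V = (\<lambda>x y::real. (x + l1*y)^2 + (x + l2*y)^2)"
  define c where "c = min (l1^2) (l2^2)"
  define L where "L = 2 + (4*l1^2 + 2)/(l1-l2)^2"
  have r1: "-b*y + l1*(x - a*y) = l1*(x + l1*y)" for x y
  proof -
    have ea: "a = -(l1+l2)" using s by simp
    have "l1^2 + a*l1 + b = 0" unfolding ea s(2)[symmetric] by (simp add: power2_eq_square algebra_simps)
    hence eb: "b = - (l1^2) - a*l1" by simp
    show ?thesis unfolding eb by (simp add: power2_eq_square algebra_simps)
  qed
  have r2: "-b*y + l2*(x - a*y) = l2*(x + l2*y)" for x y
  proof -
    have ea: "a = -(l1+l2)" using s by simp
    have "l2^2 + a*l2 + b = 0" unfolding ea s(2)[symmetric] by (simp add: power2_eq_square algebra_simps)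
    hence eb: "b = - (l2^2) - a*l2" by simp
    show ?thesis unfolding eb by (simp add: power2_eq_square algebra_simps)
  qed
  have neg: "\<forall>x y. V (-x) (-y) = V x y" by (simp add: V_def power2_eq_square algebra_simps)
  have mul: "c * V x y \<le> V (-b*y) (x - a*y)" for x y
  proof -
    have "V (-b*y) (x - a*y) = l1^2*(x + l1*y)^2 + l2^2*(x + l2*y)^2"
      unfolding V_def r1 r2 by (simp add: power_mult_distrib)
    moreover have "c*(x + l1*y)^2 \<le> l1^2*(x + l1*y)^2" by (intro mult_right_mono) (auto simp: c_def)
    moreover have "c*(x + l2*y)^2 \<le> l2^2*(x + l2*y)^2" by (intro mult_right_mono) (auto simp: c_def)
    ultimately show ?thesis by (simp add: V_def distrib_left)
  qed
  have d: "0 < (l1-l2)^2" using ne by simp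
  have low: "x^2+y^2 \<le> L * V x y" for x y
  proof -
    define p where "p = x + l1*y"
    define q where "q = x + l2*y"
    have y: "y = (p - q)/(l1 - l2)" using ne by (simp add: p_def q_def field_simps)
    have y2: "y^2 \<le> 2*V x y/(l1-l2)^2"
    proof -
      have "y^2 = (p-q)^2/(l1-l2)^2" using y by (simp add: power_divide)
      also have "\<dots> \<le> (2*p^2 + 2*q^2)/(l1-l2)^2" using sq_add_le[of p "-q"] d
        by (intro divide_right_mono) auto
      finally show ?thesis by (simp add: V_def p_def q_def)
    qed
    have x: "x = p - l1*y" by (simp add: p_def)
    have x2: "x^2 \<le> 2*p^2 + 2*l1^2*y^2" using sq_add_le[of p "-l1*y"] x by (simp add: power_mult_distrib)
    define W where "W = V x y/(l1-l2)^2"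
    have y2': "y^2 \<le> 2*W" using y2 by (simp add: W_def)
    have "l1^2*y^2 \<le> l1^2*(2*W)" using y2' by (intro mult_left_mono) auto
    hence l1y: "l1^2*y^2 \<le> 2*(l1^2*W)" by simp
    moreover have "p^2 \<le> V x y" by (simp add: V_def p_def)
    moreover have "(4*l1^2+2)*W = 4*(l1^2*W) + 2*W" by (simp add: algebra_simps)
    ultimately have "x^2 + y^2 \<le> 2*V x y + (4*l1^2+2)*W"
      using x2 y2' by linarith
    hence "x^2 + y^2 \<le> 2*V x y + (4*l1^2+2)*(V x y/(l1-l2)^2)" by (simp add: W_def)
    moreover have "L * V x y = 2*V x y + (4*l1^2+2)*(V x y/(l1-l2)^2)"
      unfolding L_def by (simp add: distrib_right)
    ultimately show ?thesis by simp
  qed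
  have Lpos: "0 < L" using d by (simp add: L_def add_pos_nonneg)
  have up: "V x y \<le> (4 + 2*l1^2 + 2*l2^2)*(x^2+y^2)" for x y
  proof -
    have "(x + l1*y)^2 \<le> 2*x^2 + 2*l1^2*y^2" using sq_add_le[of x "l1*y"] by (simp add: power_mult_distrib)
    moreover have "(x + l2*y)^2 \<le> 2*x^2 + 2*l2^2*y^2" using sq_add_le[of x "l2*y"] by (simp add: power_mult_distrib)
    moreover have "0 \<le> l1^2*x^2" "0 \<le> l2^2*x^2" "0 \<le> y^2" by auto
    moreover have "(4 + 2*l1^2 + 2*l2^2)*(x^2+y^2) = 4*x^2 + 4*y^2 + 2*(l1^2*x^2) + 2*(l1^2*y^2) + 2*(l2^2*x^2) + 2*(l2^2*y^2)"
      by (simp add: algebra_simps)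
    ultimately show ?thesis unfolding V_def by linarith
  qed
  show ?thesis
    apply (rule exI[of _ V], rule exI[of _ c], rule exI[of _ "1/L"], rule exI[of _ "4 + 2*l1^2 + 2*l2^2"])
    using neg mul low up g Lpos by (auto simp: c_def field_simps add_pos_nonneg)
qed

lemma caseC:
  fixes a b l :: real
  assumes s: "a = -2*l" "b = l^2" and g: "4 \<le> l^2"
  shows "\<exists>V c \<kappa> K. 1 < c \<and> 0 < \<kappa> \<and> 0 < K \<and> (\<forall>x y. V (-x) (-y) = V x y)
     \<and> (\<forall>x y. c * V x y \<le> V (-b*y) (x - a*y))
     \<and> (\<forall>x y. \<kappa>*(x^2+y^2) \<le> V x y) \<and> (\<forall>x y. V x y \<le> K*(x^2+y^2))"
proof -
  define V where "V = (\<lambda>x y::real. max ((x + l*y)^2) (y^2/4))"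
  have neg: "\<forall>x y. V (-x) (-y) = V x y" by (simp add: V_def power2_eq_square algebra_simps)
  have la: "2 \<le> \<bar>l\<bar>"
  proof -
    have "(2::real)^2 \<le> l^2" using g by simp
    hence "\<bar>2::real\<bar> \<le> \<bar>l\<bar>" using abs_le_square_iff by blast
    thus ?thesis by simp
  qed
  have mul: "9/4 * V x y \<le> V (-b*y) (x - a*y)" for x y
  proof -
    define p where "p = x + l*y"
    have e1: "-b*y + l*(x - a*y) = l*p" unfolding s p_def by (simp add: power2_eq_square algebra_simps)
    have e2: "x - a*y = p + l*y" unfolding s p_def by (simp add: algebra_simps)
    have VV: "V (-b*y) (x - a*y) = max ((l*p)^2) ((p + l*y)^2/4)" unfolding V_def e1 e2[symmetric] ..
    show ?thesis
    proof (cases "y^2/4 \<le> p^2")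
      case True
      hence "V x y = p^2" by (simp add: V_def p_def)
      moreover have "9/4*p^2 \<le> (l*p)^2"
      proof -
        have "4*p^2 \<le> l^2*p^2" using g by (intro mult_right_mono) auto
        moreover have "0 \<le> p^2" by simp
        moreover have "(l*p)^2 = l^2*p^2" by (simp add: power_mult_distrib)
        ultimately show ?thesis by linarith
      qed
      ultimately show ?thesis unfolding VV by simp
    next
      case False
      hence V: "V x y = y^2/4" by (simp add: V_def p_def)
      have "p^2 \<le> (\<bar>y\<bar>/2)^2" using False by (simp add: power_divide)
      hence "\<bar>p\<bar> \<le> \<bar>\<bar>y\<bar>/2\<bar>" using abs_le_square_iff by blast
      hence "\<bar>p\<bar> \<le> \<bar>y\<bar>/2" by simp
      moreover have "2*\<bar>y\<bar> \<le> \<bar>l*y\<bar>" using la by (simp add: abs_mult mult_right_mono)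
      ultimately have "3/2*\<bar>y\<bar> \<le> \<bar>p + l*y\<bar>" by linarith
      hence "(3/2*\<bar>y\<bar>)^2 \<le> \<bar>p + l*y\<bar>^2" by (intro power_mono) auto
      hence "(3/2*\<bar>y\<bar>)^2 \<le> (p + l*y)^2" by simp
      moreover have "(3/2*\<bar>y\<bar>)^2 = 9/4*y^2" by (simp add: power2_eq_square)
      ultimately have "9/4*(y^2/4) \<le> (p + l*y)^2/4" by simp
      thus ?thesis unfolding VV V by simp
    qed
  qed
  have low: "x^2+y^2 \<le> (6 + 8*b) * V x y" for x y
  proof -
    define p where "p = x + l*y"
    have py: "p^2 \<le> V x y" "y^2 \<le> 4*V x y" by (auto simp: V_def p_def)
    have "x^2 \<le> 2*p^2 + 2*(l^2*y^2)" using sq_add_le[of p "-l*y"] by (simp add: p_def power_mult_distrib)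
    moreover have "l^2*y^2 \<le> l^2*(4*V x y)" using py by (intro mult_left_mono) auto
    moreover have "(6 + 8*b) * V x y = 6*V x y + 8*(l^2*V x y)" unfolding s by (simp add: algebra_simps)
    ultimately show ?thesis using py by linarith
  qed
  have up: "V x y \<le> (3 + 2*b)*(x^2+y^2)" for x y
  proof -
    have "(x + l*y)^2 \<le> 2*x^2 + 2*(l^2*y^2)" using sq_add_le[of x "l*y"] by (simp add: power_mult_distrib)
    moreover have "0 \<le> l^2*x^2" "0 \<le> x^2" "0 \<le> y^2" by auto
    moreover have "(3 + 2*b)*(x^2+y^2) = 3*x^2 + 3*y^2 + 2*(l^2*x^2) + 2*(l^2*y^2)"
      unfolding s by (simp add: algebra_simps)
    moreover have "V x y \<le> (x+l*y)^2 + y^2" unfolding V_def by simp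
    ultimately show ?thesis by linarith
  qed
  have b0: "0 < b" using g s by (smt (verit) zero_le_power2)
  show ?thesis
    apply (rule exI[of _ V], rule exI[of _ "9/4"], rule exI[of _ "1/(6+8*b)"], rule exI[of _ "3 + 2*b"])
    using neg mul low up b0 by (auto simp: field_simps)
qed


lemma root_gt1:
  fixes l m a b :: real
  assumes "l + m = - a" "l * m = b" "\<bar>a\<bar> \<le> b" "b \<ge> 2"
  shows "1 < l^2"
proof (rule ccontr)
  assume "\<not> 1 < l^2"
  hence "\<bar>l\<bar> \<le> 1" by (simp add: abs_square_le_1[symmetric])
  hence l: "-1 \<le> l" "l \<le> 1" by auto
  have p1: "(1-l)*(1-m) > 0" using assms by (simp add: algebra_simps; linarith)
  have p2: "(1+l)*(1+m) > 0" using assms by (simp add: algebra_simps; linarith)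
  have "1 - l > 0" using p1 l by (cases "l = 1") auto
  hence m1: "1 - m > 0" using p1 by (simp add: zero_less_mult_iff)
  have "1 + l > 0" using p2 l by (cases "l = -1") auto
  hence m2: "1 + m > 0" using p2 by (simp add: zero_less_mult_iff)
  have "\<bar>l*m\<bar> \<le> \<bar>m\<bar>" using l by (simp add: abs_mult mult_left_le_one_le)
  thus False using m1 m2 assms by auto
qed

lemma expand_int:
  fixes A B :: int
  assumes AB: "\<bar>A\<bar> \<le> B" "2 \<le> B"
  shows "\<exists>V c \<kappa> K. 1 < c \<and> 0 < \<kappa> \<and> 0 < K \<and> (\<forall>x y. V (-x) (-y) = V x y)
     \<and> (\<forall>x y. c * V x y \<le> V (-(of_int B::real)*y) (x - of_int A*y))
     \<and> (\<forall>x y. \<kappa>*(x^2+y^2) \<le> V x y) \<and> (\<forall>x y. V x y \<le> K*(x^2+y^2))"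
proof -
  define a where "a = (of_int A :: real)"
  define b where "b = (of_int B :: real)"
  have ab: "\<bar>a\<bar> \<le> b" "2 \<le> b" using AB by (simp_all add: a_def b_def)
  consider "A^2 < 4*B" | "A^2 > 4*B" | "A^2 = 4*B" by linarith
  hence "\<exists>V c \<kappa> K. 1 < c \<and> 0 < \<kappa> \<and> 0 < K \<and> (\<forall>x y. V (-x) (-y) = V x y)
     \<and> (\<forall>x y. c * V x y \<le> V (-b*y) (x - a*y))
     \<and> (\<forall>x y. \<kappa>*(x^2+y^2) \<le> V x y) \<and> (\<forall>x y. V x y \<le> K*(x^2+y^2))"
  proof cases
    case 1
    hence "A^2 \<le> 4*B - 1" by linarith
    hence "real_of_int (A^2) \<le> real_of_int (4*B - 1)" by (simp only: of_int_le_iff)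
    hence "a^2 \<le> 4*b - 1" unfolding a_def b_def by simp
    thus ?thesis using caseA ab by blast
  next
    case 2
    hence "real_of_int (4*B) < real_of_int (A^2)" by (simp only: of_int_less_iff)
    hence "4*b < a^2" unfolding a_def b_def by simp
    define s where "s = sqrt (a^2 - 4*b)"
    have s0: "0 < s" using \<open>4*b < a^2\<close> by (simp add: s_def)
    have ss: "s^2 = a^2 - 4*b" using \<open>4*b < a^2\<close> by (simp add: s_def)
    define l1 where "l1 = (-a + s)/2"
    define l2 where "l2 = (-a - s)/2"
    have sum: "l1 + l2 = -a" by (simp add: l1_def l2_def field_simps)
    have prod: "l1 * l2 = b"
    proof -
      have "l1 * l2 = (a^2 - s^2)/4" by (simp add: l1_def l2_def power2_eq_square field_simps)
      thus ?thesis using ss by simp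
    qed
    have ne: "l1 \<noteq> l2" using s0 by (simp add: l1_def l2_def)
    have g1: "1 < l1^2" using root_gt1[OF sum prod ab] .
    have g2: "1 < l2^2" using root_gt1[of l2 l1 a b] sum prod ab by (simp add: algebra_simps)
    show ?thesis using caseB[OF sum prod ne g1 g2] .
  next
    case 3
    have "\<bar>A\<bar>^2 \<le> B^2" using AB by (intro power_mono) auto
    hence "A^2 \<le> B^2" by simp
    hence "4*B \<le> B*B" using 3 by (simp add: power2_eq_square)
    hence B4: "4 \<le> B" using AB by simp
    define l where "l = -a/2"
    have "real_of_int (A^2) = real_of_int (4*B)" using 3 by (simp only: of_int_eq_iff)
    hence e3: "a^2 = 4*b" unfolding a_def b_def by simp
    have la: "a = -2*l" by (simp add: l_def)
    have lb: "b = l^2" using e3 by (simp add: l_def power_divide)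
    have "4 \<le> l^2" using B4 lb by (simp add: b_def)
    thus ?thesis using caseC[OF la lb] by blast
  qed
  thus ?thesis by (simp add: a_def b_def)
qed


lemma uniq_sub:
  fixes M0 :: "real^2^2" and t :: "real^2" and d :: "'i \<Rightarrow> real^2" and X Y :: "(real^2) set"
    and V :: "real^2 \<Rightarrow> real"
  assumes c: "1 < c" and kp: "0 < \<kappa>" and Kp: "0 < K"
   and neg: "\<forall>w. V (-w) = V w" and mul: "\<forall>w. c * V w \<le> V (M0 *v w)"
   and low: "\<forall>w. \<kappa> * norm w^2 \<le> V w" and up: "\<forall>w. V w \<le> K * norm w^2"
   and X: "X \<noteq> {}" "compact X" "(\<lambda>x. M0 *v x + t) ` X = (\<Union>k\<in>I. (\<lambda>x. x + d k) ` X) \<union> uminus ` X"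
   and Y: "Y \<noteq> {}" "compact Y" "(\<lambda>x. M0 *v x + t) ` Y = (\<Union>k\<in>I. (\<lambda>x. x + d k) ` Y) \<union> uminus ` Y"
  shows "X \<subseteq> Y"
proof
  obtain bX where bX: "\<forall>x\<in>X. norm x \<le> bX" using compact_imp_bounded[OF X(2)] bounded_iff by blast
  obtain bY where bY: "\<forall>x\<in>Y. norm x \<le> bY" using compact_imp_bounded[OF Y(2)] bounded_iff by blast
  define R where "R = K*(bX+bY)^2"
  have R0: "0 \<le> R" using Kp by (simp add: R_def)
  have step: "\<forall>x\<in>X. \<exists>y\<in>Y. V (x - y) \<le> R / c^n" for n
  proof (induction n)
    case 0
    show ?case
    proof
      fix x assume x: "x \<in> X"
      obtain y where y: "y \<in> Y" using Y(1) by blast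
      have "norm x \<le> bX" "norm y \<le> bY" using bX bY x y by auto
      hence "norm (x - y) \<le> bX + bY" using norm_triangle_ineq4[of x y] by linarith
      hence "norm (x - y)^2 \<le> (bX + bY)^2" by (intro power_mono) auto
      hence "K * norm (x - y)^2 \<le> R" using Kp unfolding R_def by (intro mult_left_mono) auto
      hence "V (x - y) \<le> R" using up[rule_format, of "x - y"] by linarith
      thus "\<exists>y\<in>Y. V (x - y) \<le> R / c ^ 0" using y by auto
    qed
  next
    case (Suc n)
    show ?case
    proof
      fix x assume x: "x \<in> X"
      have "M0 *v x + t \<in> (\<lambda>x. M0 *v x + t) ` X" using x by (rule imageI)
      hence "M0 *v x + t \<in> (\<Union>k\<in>I. (\<lambda>x. x + d k) ` X) \<union> uminus ` X" by (simp only: X(3))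
      then consider (a) k x1 where "k \<in> I" "x1 \<in> X" "M0 *v x + t = x1 + d k"
        | (b) x1 where "x1 \<in> X" "M0 *v x + t = - x1"
        by (elim UnE UN_E imageE) auto
      then obtain x1 y y1 where x1: "x1 \<in> X" and y: "y \<in> Y" and y1: "V (x1 - y1) \<le> R / c^n"
        and e: "M0 *v (x - y) = x1 - y1 \<or> M0 *v (x - y) = -(x1 - y1)"
      proof cases
        case a
        obtain y1 where y1: "y1 \<in> Y" "V (x1 - y1) \<le> R / c^n" using Suc a(2) by blast
        have "y1 + d k \<in> (\<Union>k\<in>I. (\<lambda>x. x + d k) ` Y) \<union> uminus ` Y" using y1(1) a(1) by (intro UnI1 UN_I[OF a(1)] imageI[of _ _ "\<lambda>x. x + d k", simplified]) auto
        hence "y1 + d k \<in> (\<lambda>x. M0 *v x + t) ` Y" by (simp only: Y(3))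
        then obtain y where y: "y \<in> Y" "M0 *v y + t = y1 + d k" by (metis (no_types, lifting) imageE)
        have "M0 *v (x - y) = (M0 *v x + t) - (M0 *v y + t)" by (simp add: matrix_vector_mult_diff_distrib)
        hence "M0 *v (x - y) = x1 - y1" using a(3) y(2) by simp
        thus ?thesis using that a(2) y(1) y1(2) by blast
      next
        case b
        obtain y1 where y1: "y1 \<in> Y" "V (x1 - y1) \<le> R / c^n" using Suc b(1) by blast
        have "- y1 \<in> (\<Union>k\<in>I. (\<lambda>x. x + d k) ` Y) \<union> uminus ` Y" using y1(1) by (intro UnI2 imageI)
        hence "- y1 \<in> (\<lambda>x. M0 *v x + t) ` Y" by (simp only: Y(3))
        then obtain y where y: "y \<in> Y" "M0 *v y + t = - y1" by (metis (no_types, lifting) imageE)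
        have "M0 *v (x - y) = (M0 *v x + t) - (M0 *v y + t)" by (simp add: matrix_vector_mult_diff_distrib)
        hence "M0 *v (x - y) = -(x1 - y1)" using b(2) y(2) by simp
        thus ?thesis using that b(1) y(1) y1(2) by blast
      qed
      have "V (M0 *v (x - y)) = V (x1 - y1)" using e neg[rule_format, of "x1 - y1"] by (elim disjE) simp_all
      hence "c * V (x - y) \<le> R / c^n" using mul[rule_format, of "x - y"] y1 by linarith
      hence "V (x - y) \<le> R / c ^ Suc n" using c by (simp add: field_simps)
      thus "\<exists>y\<in>Y. V (x - y) \<le> R / c ^ Suc n" using y by blast
    qed
  qed
  fix x assume x: "x \<in> X"
  have "x \<in> closure Y"
    unfolding closure_approachable
  proof (intro allI impI)
    fix e :: real assume e: "0 < e"
    have "0 < \<kappa>*e^2/(R+1)" using kp e R0 by simp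
    moreover have "1/c < 1" using c by simp
    ultimately obtain n where n: "(1/c)^n < \<kappa>*e^2/(R+1)" using real_arch_pow_inv by blast
    obtain y where y: "y \<in> Y" "V (x - y) \<le> R / c^n" using step x by blast
    have "R / c^n = R * (1/c)^n" by (simp add: power_one_over)
    also have "\<dots> \<le> (R+1) * (1/c)^n" using c by (intro mult_right_mono) auto
    also have "\<dots> < \<kappa>*e^2" using n R0 by (simp add: field_simps)
    finally have "R / c^n < \<kappa> * e^2" .
    hence "\<kappa> * norm (x - y)^2 < \<kappa> * e^2" using y(2) low[rule_format, of "x - y"] by linarith
    hence "norm (x - y)^2 < e^2" using kp by simp
    hence "norm (x - y) < e"
    proof (rule contrapos_pp)
      assume "\<not> norm (x - y) < e"
      hence "e \<le> norm (x - y)" by simp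
      hence "e^2 \<le> norm (x - y)^2" using e by (intro power_mono) auto
      thus "\<not> norm (x - y)^2 < e^2" by simp
    qed
    thus "\<exists>y\<in>Y. dist y x < e" using y by (auto simp: dist_norm norm_minus_commute)
  qed
  thus "x \<in> Y" using compact_imp_closed[OF Y(2)] closure_closed by blast
qed


lemma norm2_sq: "norm (w::real^2) ^ 2 = (w$1)^2 + (w$2)^2"
  by (simp add: norm_vec_def L2_set_def sum_2)

lemma Mm_comp:
  fixes A B :: int and w :: "real^2"
  shows "((vector [vector [0, - of_int B], vector [1, - of_int A]] :: real^2^2) *v w) $ 1 = - of_int B * w$2"
    "((vector [vector [0, - of_int B], vector [1, - of_int A]] :: real^2^2) *v w) $ 2 = w$1 - of_int A * w$2"
  by (simp_all add: matrix_vector_mult_def sum_2)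

lemma expand_vec:
  fixes A B :: int
  assumes AB: "\<bar>A\<bar> \<le> B" "2 \<le> B"
  shows "\<exists>V c \<kappa> K. 1 < c \<and> 0 < \<kappa> \<and> 0 < K \<and> (\<forall>w. V (-w) = V w)
     \<and> (\<forall>w. c * V w \<le> V ((vector [vector [0, - of_int B], vector [1, - of_int A]] :: real^2^2) *v w))
     \<and> (\<forall>w. \<kappa> * norm w^2 \<le> V w) \<and> (\<forall>w::real^2. V w \<le> K * norm w^2)"
proof -
  obtain V :: "real \<Rightarrow> real \<Rightarrow> real" and c \<kappa> K where h: "1 < c" "0 < \<kappa>" "0 < K" "\<forall>x y. V (-x) (-y) = V x y"
     "\<forall>x y. c * V x y \<le> V (-of_int B*y) (x - of_int A*y)"
     "\<forall>x y. \<kappa>*(x^2+y^2) \<le> V x y" "\<forall>x y. V x y \<le> K*(x^2+y^2)"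
    using expand_int[OF AB] by blast
  show ?thesis
    apply (rule exI[of _ "\<lambda>w::real^2. V (w$1) (w$2)"], rule exI[of _ c], rule exI[of _ \<kappa>], rule exI[of _ K])
    using h by (simp add: Mm_comp norm2_sq)
qed

lemma charpoly_coeffs:
  fixes Mt :: "real^2^2"
  assumes "\<forall>x::real. det (mat x - Mt) = x^2 + a * x + b"
  shows "a = -(Mt$1$1 + Mt$2$2)" "b = Mt$1$1*Mt$2$2 - Mt$1$2*Mt$2$1"
proof -
  have d: "det (mat x - Mt) = (x - Mt$1$1)*(x - Mt$2$2) - Mt$1$2*Mt$2$1" for x
    by (simp add: det_2 mat_def)
  have 0: "b = Mt$1$1*Mt$2$2 - Mt$1$2*Mt$2$1" using assms[rule_format, of 0] d[of 0] by simp
  have 1: "1 + a + b = (1 - Mt$1$1)*(1 - Mt$2$2) - Mt$1$2*Mt$2$1" using assms[rule_format, of 1] d[of 1] by simp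
  show "b = Mt$1$1*Mt$2$2 - Mt$1$2*Mt$2$1" by (fact 0)
  show "a = -(Mt$1$1 + Mt$2$2)" using 0 1 by (simp add: algebra_simps)
qed

theorem lemma2p3:
  fixes A B :: int
    and Mt :: "real^2^2" and v :: "real^2"
    and Tt T :: "(real^2) set"
  assumes AB: "\<bar>A\<bar> \<le> B" "B \<ge> 2"
    and Mt_int: "\<forall>i j. Mt $ i $ j \<in> \<int>"
    and charpoly: "\<forall>x::real. det (mat x - Mt) = x^2 + of_int A * x + of_int B"
    and v_int: "\<forall>i. v $ i \<in> \<int>"
    and indep: "\<forall>a b::real. a *\<^sub>R v + b *\<^sub>R (Mt *v v) = 0 \<longrightarrow> a = 0 \<and> b = 0"
    and Tt: "Tt \<noteq> {}" "compact Tt"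
      "(\<lambda>x. Mt *v x + ((of_int B - 1) / 2) *\<^sub>R v) ` Tt =
         (\<Union>k\<in>{0..B-2}. (\<lambda>x. x + of_int k *\<^sub>R v) ` Tt) \<union> uminus ` Tt"
    and T: "T \<noteq> {}" "compact T"
      "(\<lambda>x. (vector [vector [0, - of_int B], vector [1, - of_int A]] :: real^2^2) *v x
             + vector [(of_int B - 1) / 2, 0]) ` T =
         (\<Union>k\<in>{0..B-2}. (\<lambda>x. x + vector [of_int k, 0]) ` T) \<union> uminus ` T"
  shows "Tt = (\<lambda>x. ((\<chi> i j. if j = 1 then v $ i else (Mt *v v) $ i) :: real^2^2) *v x) ` T"
proof -
  define Mm where "Mm = (vector [vector [0, - of_int B], vector [1, - of_int A]] :: real^2^2)"
  define C where "C = ((\<chi> i j. if j = 1 then v $ i else (Mt *v v) $ i) :: real^2^2)"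
  define e1 where "e1 = (vector [1, 0] :: real^2)"
  have cA: "of_int A = -(Mt$1$1 + Mt$2$2)" and cB: "of_int B = Mt$1$1*Mt$2$2 - Mt$1$2*Mt$2$1"
    using charpoly_coeffs[OF charpoly] by auto
  have Cw: "C *v w = w$1 *\<^sub>R v + w$2 *\<^sub>R (Mt *v v)" for w
    by (simp add: C_def vec_eq_iff forall_2 matrix_vector_mult_def sum_2 mult.commute)
  have Ce1: "C *v e1 = v" by (simp add: Cw e1_def)
  have CM: "C *v (Mm *v w) = Mt *v (C *v w)" for w
    unfolding Cw Mm_def
    by (simp add: Mm_comp vec_eq_iff forall_2 matrix_vector_mult_def sum_2 cA cB algebra_simps)
  have Cinj: "\<forall>x. C *v x = 0 \<longrightarrow> x = 0"
  proof (intro allI impI)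
    fix x :: "real^2" assume "C *v x = 0"
    hence "x$1 *\<^sub>R v + x$2 *\<^sub>R (Mt *v v) = 0" by (simp only: Cw)
    hence "x$1 = 0 \<and> x$2 = 0" using indep by blast
    thus "x = 0" by (simp add: vec_eq_iff forall_2)
  qed
  then obtain Bi where BiC: "Bi ** C = mat 1" using matrix_left_invertible_ker[of C] by metis
  hence CBi: "C ** Bi = mat 1" using matrix_left_right_inverse by blast
  have BC: "Bi *v (C *v w) = w" for w using BiC by (simp add: matrix_vector_mul_assoc)
  have CB: "C *v (Bi *v w) = w" for w using CBi by (simp add: matrix_vector_mul_assoc)
  define S where "S = (\<lambda>x. Bi *v x) ` Tt"
  have TtS: "Tt = (\<lambda>x. C *v x) ` S" by (simp add: S_def image_image CB)
  have Bv: "Bi *v v = e1" using BC[of e1] Ce1 by simp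
  have k1: "Bi *v (Mt *v x + ((of_int B - 1) / 2) *\<^sub>R v) = Mm *v (Bi *v x) + vector [(of_int B - 1) / 2, 0]" for x
  proof -
    have "C *v (Mm *v (Bi *v x) + vector [(of_int B - 1) / 2, 0]) = Mt *v x + ((of_int B - 1) / 2) *\<^sub>R v"
    proof -
      have ve: "vector [(of_int B - 1) / 2, 0] = ((of_int B - 1)/2) *\<^sub>R e1" by (simp add: e1_def vec_eq_iff forall_2)
      show ?thesis by (simp only: matrix_vector_right_distrib CM CB ve matrix_vector_mult_scaleR Ce1)
    qed
    thus ?thesis by (metis BC)
  qed
  have k2: "Bi *v (x + c *\<^sub>R v) = Bi *v x + vector [c, 0]" for x c
    by (simp add: matrix_vector_right_distrib matrix_vector_mult_scaleR Bv e1_def vec_eq_iff forall_2)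
  have k3: "Bi *v (- x) = - (Bi *v x)" for x by (rule vec.neg)
  have Seq: "(\<lambda>x. Mm *v x + vector [(of_int B - 1) / 2, 0]) ` S =
         (\<Union>k\<in>{0..B-2}. (\<lambda>x. x + vector [of_int k, 0]) ` S) \<union> uminus ` S"
  proof -
    have "(\<lambda>x. Mm *v x + vector [(of_int B - 1) / 2, 0]) ` S =
       (\<lambda>x. Bi *v x) ` ((\<lambda>x. Mt *v x + ((of_int B - 1) / 2) *\<^sub>R v) ` Tt)"
      by (simp add: S_def image_image k1)
    also have "\<dots> = (\<lambda>x. Bi *v x) ` ((\<Union>k\<in>{0..B-2}. (\<lambda>x. x + of_int k *\<^sub>R v) ` Tt) \<union> uminus ` Tt)"
      by (simp only: Tt(3))
    also have "\<dots> = (\<Union>k\<in>{0..B-2}. (\<lambda>x. x + vector [of_int k, 0]) ` S) \<union> uminus ` S"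
      by (simp add: image_Un image_UN image_image S_def k2 k3)
    finally show ?thesis .
  qed
  have Sc: "compact S" unfolding S_def
    by (intro compact_continuous_image Tt(2) matrix_vector_mult_linear_continuous_on)
  have Sne: "S \<noteq> {}" using Tt(1) by (simp add: S_def)
  obtain V c \<kappa> K where h: "1 < c" "0 < \<kappa>" "0 < K" "\<forall>w. V (-w) = V w"
     "\<forall>w. c * V w \<le> V (Mm *v w)" "\<forall>w. \<kappa> * norm w^2 \<le> V w" "\<forall>w::real^2. V w \<le> K * norm w^2"
    using expand_vec[OF AB(1) AB(2)] unfolding Mm_def by blast
  have "S \<subseteq> T" using uniq_sub[OF h Sne Sc Seq T[folded Mm_def]] .
  moreover have "T \<subseteq> S" using uniq_sub[OF h T[folded Mm_def] Sne Sc Seq] .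
  ultimately have "S = T" by blast
  hence "Tt = (\<lambda>x. C *v x) ` T" using TtS by (simp only:)
  thus ?thesis by (simp only: C_def)
qed


end
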